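(* Let $k\geq2$ be even. If the word $a_k$ followed by $a_k$ overlap at shift $s$ with $0<s<\ell_k$, then $s\geq(N_k-1)\ell_{k-1}$; that is, two copies of $a_k$ can only overlap with the initial segment $a_{k-1}$ of one copy overlapping the terminal segment $a_{k-1}$ of the other.
   Context: Alphabet $\{0,1,2\}$. Let $(N_k)_{k\geq1}$ be integers with $N_k\geq4$, $\ell_0=2$, $\ell_k=N_k\ell_{k-1}$. Words: $a_0=01$; for odd $k\geq1$, $a_k=(a_{k-1})^{N_k}$ (concatenation of $N_k$ copies); for even $k\geq2$, $a_k=a_{k-1}1^{(N_k-2)\ell_{k-1}}a_{k-1}$. Two words $u,v$ of the same length $\ell$ overlap with $u$ followed by $v$ at shift $s$ ($0<s<\ell$) if the terminal segment of length $\ell-s$ of $u$ equals the initial segment of length $\ell-s$ of $v$. *)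

theory Defs
  imports Main
begin

text \<open>Words over the alphabet {0,1,2} are represented as lists of naturals.
  The sequence (N k) for k \<ge> 1 is a function N :: nat \<Rightarrow> nat (value at 0 unused).\<close>

fun ell :: "(nat \<Rightarrow> nat) \<Rightarrow> nat \<Rightarrow> nat" where
  "ell N 0 = 2"
| "ell N (Suc k) = N (Suc k) * ell N k"

fun aw :: "(nat \<Rightarrow> nat) \<Rightarrow> nat \<Rightarrow> nat list" where
  "aw N 0 = [0, 1]"
| "aw N (Suc k) =
     (if odd (Suc k) then concat (replicate (N (Suc k)) (aw N k))
      else aw N k @ replicate ((N (Suc k) - 2) * ell N k) 1 @ aw N k)"

definition overlap_at :: "'a list \<Rightarrow> 'a list \<Rightarrow> nat \<Rightarrow> bool" where
  "overlap_at u v s \<longleftrightarrow> length u = length v \<and> 0 < s \<and> s < length u \<and>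
     drop s u = take (length u - s) v"

end

theory Submission
  imports Defs
begin

lemma len_aw:
  assumes "\<And>j. j \<ge> 1 \<Longrightarrow> N j \<ge> 4"
  shows "length (aw N j) = ell N j"
proof (induction j)
  case 0 then show ?case by simp
next
  case (Suc j)
  have "N (Suc j) \<ge> 4" using assms by simp
  then show ?case using Suc
    by (auto simp: length_concat sum_list_replicate algebra_simps left_diff_distrib)
qed

lemma ell_pos:
  assumes "\<And>j. j \<ge> 1 \<Longrightarrow> N j \<ge> 4"
  shows "ell N j > 0"
proof (induction j)
  case 0 then show ?case by simp
next
  case (Suc j)
  have "N (Suc j) \<ge> 4" using assms by simp
  then show ?case using Suc by simp
qed

lemma hd_aw:
  assumes "\<And>j. j \<ge> 1 \<Longrightarrow> N j \<ge> 4"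
  shows "aw N j ! 0 = 0"
proof (induction j)
  case 0 then show ?case by simp
next
  case (Suc j)
  have N4: "N (Suc j) \<ge> 4" using assms by simp
  have ne: "aw N j \<noteq> []" using len_aw[of N j, OF assms] ell_pos[of N j, OF assms] by auto
  from N4 obtain r where r: "N (Suc j) = Suc r" by (cases "N (Suc j)") auto
  show ?case using Suc ne r by (auto simp: nth_append)
qed

theorem lemma3p3:
  fixes N :: "nat \<Rightarrow> nat" and k s :: nat
  assumes "\<And>j. j \<ge> 1 \<Longrightarrow> N j \<ge> 4"
    and "k \<ge> 2" and "even k"
    and "0 < s" and "s < ell N k"
    and "overlap_at (aw N k) (aw N k) s"
  shows "s \<ge> (N k - 1) * ell N (k - 1)"
proof (rule ccontr)
  assume H: "\<not> ?thesis"
  obtain j where kj: "k = Suc j" using assms(2) by (cases k) auto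
  define A where "A = aw N j"
  define L where "L = ell N j"
  define m where "m = (N k - 2) * L"
  have N4: "N k \<ge> 4" using assms(1) assms(2) by simp
  have lenA: "length A = L" unfolding A_def L_def using len_aw[OF assms(1)] by simp
  have Lpos: "L > 0" unfolding L_def using ell_pos[OF assms(1)] by simp
  have A0: "A ! 0 = 0" unfolding A_def using hd_aw[OF assms(1)] by simp
  have w: "aw N k = A @ replicate m 1 @ A"
    using assms(3) kj by (simp add: A_def m_def L_def)
  define w where "w = aw N k"
  have lenw: "length w = L + m + L" using w lenA by (simp add: w_def)
  obtain r where r: "N k = r + 4" using N4 by (metis le_add_diff_inverse2)
  have mL: "m \<ge> 2 * L" unfolding m_def using r by simp
  have ov: "drop s w = take (length w - s) w"
    using assms(6) by (simp add: overlap_at_def w_def)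
  have eq: "w ! (s + i) = w ! i" if "i < length w - s" for i
  proof -
    have "drop s w ! i = take (length w - s) w ! i" using ov by simp
    then show ?thesis using that by simp
  qed
  have sl: "s < length w" using assms(5) len_aw[of N k, OF assms(1)] by (simp add: w_def)
  have ws0: "w ! s = 0" using eq[of 0] sl w A0 Lpos lenA by (simp add: w_def nth_append)
  have Hs: "s < (N k - 1) * L" using H kj L_def by simp
  have "(N k - 1) * L = L + m" unfolding m_def using N4
    using r by (simp add: algebra_simps)
  then have sLm: "s < L + m" using Hs by simp
  have sL: "s < L"
  proof (rule ccontr)
    assume "\<not> s < L"
    then have "w ! s = 1" using sLm w lenA by (auto simp: w_def nth_append)
    then show False using ws0 by simp
  qed
  define i where "i = L + m - s"
  have i1: "i < length w - s" using lenw sL Lpos unfolding i_def by simp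
  have "w ! (s + i) = 0" using sL mL A0 lenA w Lpos unfolding i_def
    by (simp add: w_def nth_append)
  moreover have "w ! i = 1" using sL mL lenA w assms(4) unfolding i_def
    by (auto simp: w_def nth_append)
  ultimately show False using eq[OF i1] by simp
qed

end
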